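(* Let $A\in\mathbb{R}^{n_x\times n_x}$, $B\in\mathbb{R}^{n_x\times n_u}$, and let $Q\in\mathbb{R}^{n_x\times n_x}$, $R\in\mathbb{R}^{n_u\times n_u}$ be symmetric positive definite, with $(A,B)$ stabilizable. Let $\mathcal{K}=\{K\in\mathbb{R}^{n_u\times n_x}:\rho(A-BK)<1\}$ and for $K\in\mathcal{K}$ let $$J(K)=\sup_{\omega\in[0,2\pi]}\lambda_{\max}^{1/2}\Big((e^{-j\omega}I-A+BK)^{-\mathsf{T}}(Q+K^{\mathsf{T}}RK)(e^{j\omega}I-A+BK)^{-1}\Big),$$ and let $J^*=\min_{K\in\mathcal{K}}J(K)$. Let $\mathcal{K}^c$ denote the complement of $\mathcal{K}$ in $\mathbb{R}^{n_u\times n_x}$. Then for every $\gamma\ge J^*$, the sublevel set $\mathcal{K}_\gamma=\{K\in\mathcal{K}:J(K)\le\gamma\}$ is strictly separated from $\mathcal{K}^c$, i.e. $\mathrm{dist}(\mathcal{K}_\gamma,\mathcal{K}^c)>0$.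
   Context: $\rho(\cdot)$ denotes spectral radius, $j=\sqrt{-1}$, $\lambda_{\max}$ the largest eigenvalue of a Hermitian matrix. Distances are measured in the Frobenius norm: $\mathrm{dist}(S,T)=\inf\{\|X-Y\|_F: X\in S, Y\in T\}$. *)

theory Defs
  imports "HOL-Analysis.Analysis"
begin

definition cmat :: "real^'n^'m \<Rightarrow> complex^'n^'m" where
  "cmat M = (\<chi> i j. complex_of_real (M $ i $ j))"

definition eigenvalues :: "complex^'n^'n \<Rightarrow> complex set" where
  "eigenvalues M = {z. det (mat z - M) = 0}"

definition spectral_radius :: "real^'n^'n \<Rightarrow> real" where
  "spectral_radius M = Max (cmod ` eigenvalues (cmat M))"

(* largest eigenvalue of a Hermitian matrix (whose eigenvalues are real) *)
definition lambda_max :: "complex^'n^'n \<Rightarrow> real" where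
  "lambda_max H = Max {x::real. complex_of_real x \<in> eigenvalues H}"

definition pos_def :: "real^'n^'n \<Rightarrow> bool" where
  "pos_def M \<longleftrightarrow> transpose M = M \<and> (\<forall>x. x \<noteq> 0 \<longrightarrow> x \<bullet> (M *v x) > 0)"

definition stab_set :: "real^'x^'x \<Rightarrow> real^'u^'x \<Rightarrow> (real^'x^'u) set" where
  "stab_set A B = {K. spectral_radius (A - B ** K) < 1}"

definition stabilizable :: "real^'x^'x \<Rightarrow> real^'u^'x \<Rightarrow> bool" where
  "stabilizable A B \<longleftrightarrow> stab_set A B \<noteq> {}"

definition Jcost :: "real^'x^'x \<Rightarrow> real^'u^'x \<Rightarrow> real^'x^'x \<Rightarrow> real^'u^'u
                     \<Rightarrow> real^'x^'u \<Rightarrow> real" where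
  "Jcost A B Q R K =
     (SUP \<omega>\<in>{0..2*pi}.
        sqrt (lambda_max
          (transpose (matrix_inv (mat (cis (-\<omega>)) - cmat A + cmat (B ** K)))
           ** cmat (Q + transpose K ** R ** K)
           ** matrix_inv (mat (cis \<omega>) - cmat A + cmat (B ** K)))))"

(* J* = min over K of J(K) (the minimum equals the infimum when attained) *)
definition Jopt :: "real^'x^'x \<Rightarrow> real^'u^'x \<Rightarrow> real^'x^'x \<Rightarrow> real^'u^'u \<Rightarrow> real" where
  "Jopt A B Q R = (INF K\<in>stab_set A B. Jcost A B Q R K)"

end

theory Submission
  imports Defs "HOL-Complex_Analysis.Complex_Analysis"
begin


definition cpoly :: "complex^'n^'n \<Rightarrow> complex poly" where
 "cpoly M = (\<Sum>p | p permutes (UNIV::'n set). of_int (sign p) *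
     (\<Prod>i\<in>UNIV. (if p i = i then [:- (M$i$i), 1:] else [:- (M$i$(p i)):])))"

lemma poly_cpoly: "poly (cpoly M) z = det (mat z - M)"
  unfolding cpoly_def det_def
  by (auto simp: poly_sum poly_prod mat_def intro!: sum.cong prod.cong)

lemma coeff_cpoly: "coeff (cpoly (M::complex^'n^'n)) CARD('n) = 1"
proof -
  let ?f = "\<lambda>p. of_int (sign p) *
     (\<Prod>i\<in>UNIV. (if p i = i then [:- (M$i$i), 1:] else [:- (M$i$(p i)):]))"
  have idp: "id \<in> {p. p permutes (UNIV::'n set)}" by (simp add: permutes_id)
  have fin: "finite {p. p permutes (UNIV::'n set)}" by (simp add: finite_permutations)
  have c1: "coeff (?f id) CARD('n) = 1"
  proof -
    have e: "?f id = (\<Prod>i\<in>UNIV. [:- (M$i$i), 1:])" by (simp add: sign_id)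
    have d: "degree (\<Prod>i\<in>(UNIV::'n set). [:- (M$i$i), 1:]) = CARD('n)"
      by (subst degree_prod_eq_sum_degree) auto
    have l: "lead_coeff (\<Prod>i\<in>(UNIV::'n set). [:- (M$i$i), 1:]) = 1"
      by (subst lead_coeff_prod) auto
    show ?thesis using d l e by simp
  qed
  have c0: "coeff (?f p) CARD('n) = 0" if p: "p permutes (UNIV::'n set)" "p \<noteq> id" for p
  proof -
    obtain j where j: "p j \<noteq> j" using p(2) by (metis eq_id_iff)
    have "degree (\<Prod>i\<in>(UNIV::'n set). (if p i = i then [:- (M$i$i), 1:] else [:- (M$i$(p i)):]))
        \<le> (\<Sum>i\<in>(UNIV::'n set). degree (if p i = i then [:- (M$i$i), 1:] else [:- (M$i$(p i)):]))"
      using degree_prod_sum_le[of "UNIV::'n set" "\<lambda>i. (if p i = i then [:- (M$i$i), 1:] else [:- (M$i$(p i)):])"] by (simp add: o_def)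
    also have "\<dots> < (\<Sum>i\<in>(UNIV::'n set). 1)"
    proof (rule sum_strict_mono_ex1)
      show "\<forall>x\<in>UNIV. degree (if p x = x then [:- M $ x $ x, 1:] else [:- M $ x $ p x:]) \<le> 1" by auto
      show "\<exists>a\<in>UNIV. degree (if p a = a then [:- M $ a $ a, 1:] else [:- M $ a $ p a:]) < 1"
        using j by (intro bexI[of _ j]) auto
    qed auto
    finally have dl: "degree (\<Prod>i\<in>(UNIV::'n set). (if p i = i then [:- (M$i$i), 1:] else [:- (M$i$(p i)):])) < CARD('n)"
      by simp
    have "degree (?f p) \<le> degree (\<Prod>i\<in>(UNIV::'n set). (if p i = i then [:- (M$i$i), 1:] else [:- (M$i$(p i)):]))"
      by (rule order_trans[OF degree_mult_le]) simp
    with dl show ?thesis by (intro coeff_eq_0) simp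
  qed
  have "coeff (cpoly M) CARD('n) = (\<Sum>p | p permutes (UNIV::'n set). coeff (?f p) CARD('n))"
    unfolding cpoly_def by (simp add: coeff_sum)
  also have "\<dots> = coeff (?f id) CARD('n)"
    using fin idp c0 by (subst sum.remove[of _ id]) (auto intro!: sum.neutral)
  finally show ?thesis using c1 by simp
qed

lemma cpoly_nz: "cpoly M \<noteq> 0"
  using coeff_cpoly[of M] by auto

lemma eigenvalues_poly: "eigenvalues M = {z. poly (cpoly M) z = 0}"
  by (simp add: eigenvalues_def poly_cpoly)

lemma finite_eigenvalues: "finite (eigenvalues (M::complex^'n^'n))"
  unfolding eigenvalues_poly using poly_roots_finite[OF cpoly_nz[of M]] by simp

lemma eigenvalues_nonempty: "eigenvalues (M::complex^'n^'n) \<noteq> {}"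
proof -
  have "degree (cpoly M) \<ge> CARD('n)" using coeff_cpoly[of M] by (intro le_degree) simp
  then have d: "degree (cpoly M) \<noteq> 0" by (metis not_gr0 le_zero_eq zero_less_card_finite)
  have "coeff (cpoly M) (degree (cpoly M)) \<noteq> 0" using cpoly_nz[of M] by simp
  then have "\<exists>i \<in> {1..degree (cpoly M)}. coeff (cpoly M) i \<noteq> 0" using d by (intro bexI[of _ "degree (cpoly M)"]) auto
  then obtain z where "(\<Sum>i\<le>degree (cpoly M). coeff (cpoly M) i * z^i) = 0"
    using fundamental_theorem_of_algebra[of "coeff (cpoly M)" "degree (cpoly M)"] by blast
  then have "poly (cpoly M) z = 0" by (simp add: poly_altdef)
  then show ?thesis unfolding eigenvalues_poly by auto
qed


lemma det_zero_eigvec: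
  fixes M :: "'a::field^'n^'n"
  assumes "det M = 0" shows "\<exists>v. v \<noteq> 0 \<and> M *v v = 0"
proof -
  have "\<not> inj ((*v) M)"
    using det_nz_iff_inj_gen[OF matrix_vector_mul_linear_gen[of M]] assms
    by (simp add: matrix_of_matrix_vector_mul)
  then obtain x y where "x \<noteq> y" "M *v x = M *v y" unfolding inj_def by blast
  then show ?thesis
    by (intro exI[of _ "x - y"]) (simp add: matrix_vector_mult_diff_distrib)
qed

lemma eigvec_det_zero:
  fixes M :: "'a::field^'n^'n"
  assumes "v \<noteq> 0" "M *v v = 0" shows "det M = 0"
proof (rule ccontr)
  assume "det M \<noteq> 0"
  then have "inj ((*v) M)" using inj_matrix_vector_mult invertible_det_nz by blast
  moreover have "M *v 0 = 0" by simp
  ultimately show False using assms by (metis injD)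
qed

lemma inv_facts:
  fixes M :: "'a::field^'n^'n"
  assumes "det M \<noteq> 0"
  shows "M ** matrix_inv M = mat 1" "matrix_inv M ** M = mat 1"
proof -
  have "\<exists>M'. M ** M' = mat 1 \<and> M' ** M = mat 1"
    using assms invertible_det_nz invertible_def by blast
  then have "M ** matrix_inv M = mat 1 \<and> matrix_inv M ** M = mat 1"
    unfolding matrix_inv_def by (rule someI_ex)
  then show "M ** matrix_inv M = mat 1" "matrix_inv M ** M = mat 1" by auto
qed

lemma inv_left_apply:
  fixes M :: "'a::field^'n^'n"
  assumes "det M \<noteq> 0" shows "matrix_inv M *v (M *v v) = v"
  by (simp add: matrix_vector_mul_assoc inv_facts[OF assms])

lemma inv_right_apply:
  fixes M :: "'a::field^'n^'n"
  assumes "det M \<noteq> 0" shows "M *v (matrix_inv M *v v) = v"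
  by (simp add: matrix_vector_mul_assoc inv_facts[OF assms])

lemma inv_unique:
  fixes M :: "'a::field^'n^'n"
  assumes "M ** W = mat 1" "W ** M = mat 1"
  shows "matrix_inv M = W"
proof -
  have d: "det M \<noteq> 0" using assms invertible_det_nz invertible_def by blast
  have "W = W ** (M ** matrix_inv M)" by (simp add: inv_facts[OF d])
  also have "\<dots> = matrix_inv M" by (simp add: matrix_mul_assoc assms)
  finally show ?thesis by simp
qed

lemma cramer_inv:
  fixes M :: "'a::field^'n^'n"
  assumes "det M \<noteq> 0"
  shows "(matrix_inv M *v b)$k = det (\<chi> i j. if j = k then b$i else M$i$j) / det M"
  using cramer[OF assms, of "matrix_inv M *v b" b] inv_right_apply[OF assms] by simp

definition cnjm :: "complex^'n^'m \<Rightarrow> complex^'n^'m" where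
  "cnjm N = (\<chi> i j. cnj (N$i$j))"

lemma cnjm_mult: "cnjm (M ** N) = cnjm M ** cnjm N"
  by (simp add: cnjm_def matrix_matrix_mult_def vec_eq_iff)

lemma cnjm_mat: "cnjm (mat c) = mat (cnj c)"
  by (simp add: cnjm_def mat_def vec_eq_iff)

lemma cnjm_inv:
  assumes "det (M::complex^'n^'n) \<noteq> 0"
  shows "matrix_inv (cnjm M) = cnjm (matrix_inv M)"
  by (rule inv_unique) (simp_all add: cnjm_mult[symmetric] inv_facts[OF assms] cnjm_mat)

lemma cmat_diff: "cmat (A - B) = cmat A - cmat B"
  by (simp add: cmat_def vec_eq_iff)

lemma cmat_add: "cmat (A + B) = cmat A + cmat B"
  by (simp add: cmat_def vec_eq_iff)

lemma cnjm_cmat: "cnjm (cmat A) = cmat A"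
  by (simp add: cnjm_def cmat_def vec_eq_iff)

lemma cnjm_diff: "cnjm (A - B) = cnjm A - cnjm B"
  by (simp add: cnjm_def vec_eq_iff)

lemma inner_complex_cnj: "inner (a::complex) b = Re (cnj a * b)"
  by (simp add: inner_complex_def)

lemma inner_transpose_cnjm:
  fixes X :: "complex^'n^'n"
  shows "inner u (transpose (cnjm X) *v w) = inner (X *v u) w"
proof -
  have "inner u (transpose (cnjm X) *v w) = Re (\<Sum>i\<in>UNIV. \<Sum>j\<in>UNIV. cnj (u$i) * (cnj (X$j$i) * w$j))"
    by (simp add: inner_vec_def inner_complex_cnj matrix_vector_mult_def transpose_def cnjm_def sum_distrib_left)
  also have "\<dots> = Re (\<Sum>j\<in>UNIV. \<Sum>i\<in>UNIV. cnj (X$j$i * u$i) * w$j)"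
    by (subst sum.swap) (simp add: mult.commute mult.left_commute)
  also have "\<dots> = inner (X *v u) w"
    by (simp add: inner_vec_def inner_complex_cnj matrix_vector_mult_def sum_distrib_right)
  finally show ?thesis .
qed

lemma inner_cmat_expand:
  fixes P :: "real^'n^'n"
  shows "inner a (cmat P *v b) = (\<Sum>i\<in>UNIV. \<Sum>j\<in>UNIV. P$i$j * inner (a$i) (b$j))"
  by (simp add: inner_vec_def cmat_def matrix_vector_mult_def inner_sum_right
        inner_complex_def sum_distrib_left algebra_simps sum.distrib)

lemma inner_cmat_sym:
  fixes P :: "real^'n^'n"
  assumes "transpose P = P"
  shows "inner a (cmat P *v b) = inner b (cmat P *v a)"
proof -
  have s: "P$i$j = P$j$i" for i j using assms by (metis transpose_def vec_lambda_beta)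
  show ?thesis unfolding inner_cmat_expand
    by (subst sum.swap) (simp add: s inner_commute)
qed

lemma inner_cmat_real:
  fixes P :: "real^'n^'n" and y :: "complex^'n"
  shows "inner y (cmat P *v y) = (\<chi> i. Re (y$i)) \<bullet> (P *v (\<chi> i. Re (y$i)))
          + (\<chi> i. Im (y$i)) \<bullet> (P *v (\<chi> i. Im (y$i)))"
  unfolding inner_cmat_expand
  by (simp add: inner_vec_def matrix_vector_mult_def inner_complex_def sum_distrib_left
      sum.distrib[symmetric] algebra_simps)

lemma norm_re_im:
  fixes y :: "complex^'n"
  shows "norm y ^ 2 = norm (\<chi> i. Re (y$i)) ^ 2 + norm (\<chi> i. Im (y$i)) ^ 2"
  by (simp add: power2_norm_eq_inner inner_vec_def inner_complex_def sum.distrib[symmetric])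

lemma cmat_pos:
  fixes P :: "real^'n^'n"
  assumes "\<And>x. x \<bullet> (P *v x) \<ge> q * norm x ^ 2"
  shows "inner y (cmat P *v y) \<ge> q * norm y ^ 2"
  using assms[of "\<chi> i. Re (y$i)"] assms[of "\<chi> i. Im (y$i)"]
  unfolding inner_cmat_real norm_re_im by (simp add: algebra_simps)


lemma cR: "(c::real) *\<^sub>R (z::complex) = complex_of_real c * z"
  by (simp add: scaleR_conv_of_real)

lemma sR_comp: "((c::real) *\<^sub>R (v::complex^'n))$i = complex_of_real c * v$i"
  by (simp only: vector_scaleR_component) (simp add: scaleR_conv_of_real)

lemma mv_scaleR:
  fixes H :: "complex^'n^'m"
  shows "H *v (c *\<^sub>R v) = c *\<^sub>R (H *v v)"
  by (simp add: vec_eq_iff matrix_vector_mult_def cR sum_distrib_left mult.left_commute)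

lemma mat_mv: "(mat c :: 'a::semiring_1^'n^'n) *v v = c *s v"
  by (simp add: vec_eq_iff matrix_vector_mult_def mat_def if_distrib if_distribR cong: if_cong)

lemma cont_mv: "continuous_on S (\<lambda>v. (H::complex^'n^'m) *v v)"
  unfolding matrix_vector_mult_def
  by (intro continuous_on_vec_lambda continuous_intros continuous_on_sum
      linear_continuous_on bounded_linear_vec_nth)

lemma lagrange:
  fixes H :: "complex^'n^'n"
  assumes sym: "\<And>u v. inner u (H *v v) = inner v (H *v u)"
  shows "\<exists>\<mu>. complex_of_real \<mu> \<in> eigenvalues H \<and> (\<forall>v. inner v (H *v v) \<le> \<mu> * norm v ^ 2)"
proof -
  define F where "F v = inner v (H *v v)" for v
  have cF: "continuous_on S F" for S
    unfolding F_def by (intro continuous_intros cont_mv)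
  have ne: "sphere (0::complex^'n) 1 \<noteq> {}"
    using norm_axis_1[of undefined] by (auto simp: sphere_def intro!: exI[of _ "axis undefined 1"])
  obtain u0 where u0: "u0 \<in> sphere 0 1" and mx: "\<And>y. y \<in> sphere 0 1 \<Longrightarrow> F y \<le> F u0"
    using continuous_attains_sup[OF compact_sphere ne cF] by blast
  define \<mu> where "\<mu> = F u0"
  have nu0: "norm u0 = 1" using u0 by simp
  have Fs: "F (c *\<^sub>R v) = c^2 * F v" for c v
    by (simp add: F_def mv_scaleR power2_eq_square)
  have bnd: "F v \<le> \<mu> * norm v ^ 2" for v
  proof (cases "v = 0")
    case True then show ?thesis by (simp add: F_def)
  next
    case False
    then have nv: "norm v > 0" by simp
    have "F ((1 / norm v) *\<^sub>R v) \<le> \<mu>" using mx[of "(1 / norm v) *\<^sub>R v"] nv \<mu>_def by simp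
    then have "F v / (norm v)^2 \<le> \<mu>" unfolding Fs by (simp add: power_divide)
    then show ?thesis using nv by (simp add: divide_le_eq mult.commute)
  qed
  define d where "d = H *v u0 - \<mu> *\<^sub>R u0"
  have d0: "d = 0"
  proof (rule ccontr)
    assume "d \<noteq> 0"
    define D where "D = inner d d"
    have Dpos: "D > 0" using \<open>d \<noteq> 0\<close> by (simp add: D_def)
    define c where "c = \<mu> * norm d ^ 2 - F d"
    have key: "2 * t * D \<le> t^2 * c" for t
    proof -
      have "F (u0 + t *\<^sub>R d) = F u0 + 2 * t * inner d (H *v u0) + t^2 * F d"
        unfolding F_def
        by (simp add: matrix_vector_right_distrib mv_scaleR inner_add_left inner_add_right
            sym[of u0 d] power2_eq_square algebra_simps)
      moreover have "norm (u0 + t *\<^sub>R d) ^ 2 = 1 + 2 * t * inner d u0 + t^2 * norm d ^ 2"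
      proof -
        have i1: "inner u0 u0 = 1" using nu0 by (simp add: power2_norm_eq_inner[symmetric])
        show ?thesis unfolding power2_norm_eq_inner
          by (simp add: inner_add_left inner_add_right i1
            inner_commute[of u0 d] power2_eq_square algebra_simps)
      qed
      moreover have "inner d (H *v u0) - \<mu> * inner d u0 = D"
        by (simp add: D_def d_def inner_diff_right)
      ultimately show ?thesis using bnd[of "u0 + t *\<^sub>R d"]
        unfolding \<mu>_def c_def by (simp add: algebra_simps)
    qed
    define t where "t = D / (\<bar>c\<bar> + 1)"
    have tpos: "t > 0" using Dpos by (simp add: t_def)
    have "2 * t * D \<le> t * (t * c)" using key[of t] by (simp add: power2_eq_square)
    then have "2 * D \<le> t * c" using tpos by simp
    also have "\<dots> \<le> t * \<bar>c\<bar>" using tpos by (simp add: mult_left_mono)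
    also have "\<dots> < D" using Dpos by (simp add: t_def field_simps)
    finally show False using Dpos by simp
  qed
  have "(mat (complex_of_real \<mu>) - H) *v u0 = 0"
    using d0 by (simp add: d_def matrix_vector_mult_diff_rdistrib mat_mv vec_eq_iff cR)
  then have "det (mat (complex_of_real \<mu>) - H) = 0"
    using nu0 by (intro eigvec_det_zero[of u0]) auto
  then have "complex_of_real \<mu> \<in> eigenvalues H" by (simp add: eigenvalues_def)
  then show ?thesis using bnd unfolding F_def by blast
qed

lemma finite_real_eig: "finite {x::real. complex_of_real x \<in> eigenvalues H}"
proof -
  have "{x::real. complex_of_real x \<in> eigenvalues H} = of_real -` eigenvalues H" by auto
  then show ?thesis using finite_vimageI[OF finite_eigenvalues inj_of_real] by simp
qed

lemma lmax_props:
  fixes H :: "complex^'n^'n"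
  assumes sym: "\<And>u v. inner u (H *v v) = inner v (H *v u)"
  shows "\<And>v. inner v (H *v v) \<le> lambda_max H * norm v ^ 2"
    and "\<And>U. (\<And>v. inner v (H *v v) \<le> U * norm v ^ 2) \<Longrightarrow> lambda_max H \<le> U"
proof -
  obtain \<mu> where mu: "complex_of_real \<mu> \<in> eigenvalues H" "\<And>v. inner v (H *v v) \<le> \<mu> * norm v ^ 2"
    using lagrange[OF sym] by blast
  have le: "\<mu> \<le> lambda_max H" unfolding lambda_max_def
    using mu(1) finite_real_eig by (intro Max_ge) auto
  show "inner v (H *v v) \<le> lambda_max H * norm v ^ 2" for v
    using mu(2)[of v] le by (meson mult_right_mono order_trans zero_le_power2)
  have "lambda_max H \<in> {x::real. complex_of_real x \<in> eigenvalues H}" unfolding lambda_max_def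
    using mu(1) finite_real_eig by (intro Max_in) auto
  then have "det (mat (complex_of_real (lambda_max H)) - H) = 0" by (simp add: eigenvalues_def)
  then obtain u where u: "u \<noteq> 0" "(mat (complex_of_real (lambda_max H)) - H) *v u = 0"
    using det_zero_eigvec by blast
  then have Hu: "H *v u = lambda_max H *\<^sub>R u"
    by (simp add: matrix_vector_mult_diff_rdistrib mat_mv vec_eq_iff cR)
  show "lambda_max H \<le> U" if "\<And>v. inner v (H *v v) \<le> U * norm v ^ 2" for U
  proof -
    have "lambda_max H * norm u ^ 2 \<le> U * norm u ^ 2"
      using that[of u] by (simp add: Hu power2_norm_eq_inner)
    then show ?thesis using u(1) by simp
  qed
qed


lemma det_cont:
  fixes F :: "'a::topological_space \<Rightarrow> complex^'n^'n"
  assumes "\<And>i j. continuous_on S (\<lambda>w. F w $ i $ j)"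
  shows "continuous_on S (\<lambda>w. det (F w))"
  unfolding det_def by (intro continuous_intros assms)

lemma det_holo:
  fixes F :: "complex \<Rightarrow> complex^'n^'n"
  assumes "\<And>i j. (\<lambda>w. F w $ i $ j) holomorphic_on S"
  shows "(\<lambda>w. det (F w)) holomorphic_on S"
  unfolding det_def by (intro holomorphic_intros assms)

lemma hol_if:
  "(c \<Longrightarrow> f holomorphic_on S) \<Longrightarrow> (\<not> c \<Longrightarrow> g holomorphic_on S) \<Longrightarrow>
   (\<lambda>w. if c then f w else g w) holomorphic_on S"
  by (cases c) auto

lemma det_bound:
  fixes N :: "complex^'n^'n"
  assumes "\<And>i j. norm (N$i$j) \<le> b"
  shows "norm (det N) \<le> fact CARD('n) * b ^ CARD('n)"
proof -
  have b0: "0 \<le> b" using assms[of undefined undefined] norm_ge_zero order_trans by blast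
  have "norm (det N) \<le> (\<Sum>p | p permutes (UNIV::'n set). norm (of_int (sign p) * (\<Prod>i\<in>UNIV. N$i$(p i)) :: complex))"
    unfolding det_def by (rule norm_sum)
  also have "\<dots> \<le> (\<Sum>p | p permutes (UNIV::'n set). b ^ CARD('n))"
  proof (rule sum_mono)
    fix p
    have "norm (of_int (sign p) * (\<Prod>i\<in>UNIV. N$i$(p i)) :: complex) = norm (\<Prod>i\<in>UNIV. N$i$(p i))"
      by (simp add: norm_mult sign_def)
    also have "\<dots> \<le> (\<Prod>i\<in>(UNIV::'n set). norm (N$i$(p i)))" by (rule norm_prod_le)
    also have "\<dots> \<le> (\<Prod>i\<in>(UNIV::'n set). b)" by (intro prod_mono) (auto simp: assms)
    finally show "norm (of_int (sign p) * (\<Prod>i\<in>UNIV. N$i$(p i)) :: complex) \<le> b ^ CARD('n)" by simp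
  qed
  also have "\<dots> = fact CARD('n) * b ^ CARD('n)"
    using card_permutations[of "UNIV::'n set" "CARD('n)"] by simp
  finally show ?thesis .
qed

lemma norm_le_sum_comp: "norm (x::'a::real_normed_vector^'n) \<le> (\<Sum>i\<in>UNIV. norm (x$i))"
  by (simp add: norm_vec_def L2_set_le_sum)

lemma norm_mv_bound:
  fixes N :: "complex^'n^'m"
  shows "norm (N *v y) \<le> (\<Sum>i\<in>UNIV. \<Sum>j\<in>UNIV. norm (N$i$j)) * norm y"
proof -
  have "norm (N *v y) \<le> (\<Sum>i\<in>UNIV. norm ((N *v y)$i))" by (rule norm_le_sum_comp)
  also have "\<dots> \<le> (\<Sum>i\<in>UNIV. \<Sum>j\<in>UNIV. norm (N$i$j) * norm y)"
  proof (rule sum_mono)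
    fix i
    have "norm ((N *v y)$i) \<le> (\<Sum>j\<in>UNIV. norm (N$i$j * y$j))"
      unfolding matrix_vector_mult_def by (simp add: norm_sum)
    also have "\<dots> \<le> (\<Sum>j\<in>UNIV. norm (N$i$j) * norm y)"
      by (intro sum_mono) (auto simp: norm_mult intro!: mult_left_mono Finite_Cartesian_Product.norm_nth_le)
    finally show "norm ((N *v y)$i) \<le> (\<Sum>j\<in>UNIV. norm (N$i$j) * norm y)" .
  qed
  finally show ?thesis by (simp add: sum_distrib_right)
qed

lemma det_not_eig:
  fixes M :: "complex^'n^'n"
  assumes "\<forall>z\<in>eigenvalues M. cmod z < 1" "cmod z \<ge> 1"
  shows "det (mat z - M) \<noteq> 0"
  using assms by (auto simp: eigenvalues_def)

lemma outside_bound: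
  fixes M :: "complex^'n^'n"
  assumes eig: "\<forall>z\<in>eigenvalues M. cmod z < 1"
    and circ: "\<And>z. cmod z = 1 \<Longrightarrow> norm (matrix_inv (mat z - M) *v b) \<le> C"
    and mu: "cmod \<mu> \<ge> 1"
  shows "norm ((matrix_inv (mat \<mu> - M) *v b)$k) \<le> C"
proof (cases "cmod \<mu> = 1")
  case True
  then show ?thesis using circ[of \<mu>] Finite_Cartesian_Product.norm_nth_le[of "matrix_inv (mat \<mu> - M) *v b" k] by linarith
next
  case False
  define E where "E w = (\<chi> i j. (if i = j then 1 else 0) - w * M$i$j)" for w :: complex
  define N where "N w = (\<chi> i j. if j = k then w * b$i else E w $ i $ j)" for w :: complex
  define g where "g w = det (N w) / det (E w)" for w
  have E0: "E 0 = mat 1" by (simp add: E_def mat_def vec_eq_iff)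
  have Escale: "E w = (\<chi> i. w *s ((mat (1/w) - M) $ i))" if "w \<noteq> 0" for w
    using that by (simp add: E_def mat_def vec_eq_iff right_diff_distrib)
  have Nscale: "N w = (\<chi> i. w *s ((\<chi> i j. if j = k then b$i else (mat (1/w) - M)$i$j) $ i))"
    if "w \<noteq> 0" for w
    using that by (simp add: N_def E_def mat_def vec_eq_iff right_diff_distrib)
  have detE: "det (E w) = w ^ CARD('n) * det (mat (1/w) - M)" if "w \<noteq> 0" for w
    unfolding Escale[OF that] det_rows_mul vec_lambda_eta by simp
  have detN: "det (N w) = w ^ CARD('n) * det (\<chi> i j. if j = k then b$i else (mat (1/w) - M)$i$j)"
    if "w \<noteq> 0" for w
    unfolding Nscale[OF that] det_rows_mul vec_lambda_eta by simp
  have Enz: "det (E w) \<noteq> 0" if "w \<in> cball 0 1" for w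
  proof (cases "w = 0")
    case True then show ?thesis by (simp add: E0)
  next
    case False
    have "cmod (1/w) \<ge> 1" using that False by (simp add: norm_divide field_simps)
    then show ?thesis using detE[OF False] det_not_eig[OF eig] False by simp
  qed
  have gX: "g w = (matrix_inv (mat (1/w) - M) *v b)$k" if "w \<in> cball 0 1" "w \<noteq> 0" for w
  proof -
    have "cmod (1/w) \<ge> 1" using that by (simp add: norm_divide field_simps)
    then have d: "det (mat (1/w) - M) \<noteq> 0" using det_not_eig[OF eig] by simp
    show ?thesis unfolding g_def cramer_inv[OF d] detE[OF that(2)] detN[OF that(2)]
      using that(2) by simp
  qed
  have holo: "(\<lambda>w. det (N w)) holomorphic_on UNIV" "(\<lambda>w. det (E w)) holomorphic_on UNIV"
    unfolding N_def E_def det_def vec_lambda_beta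
    by (intro holomorphic_intros hol_if; simp)+
  have hg: "g holomorphic_on (interior (ball 0 1))"
    unfolding g_def interior_ball
    by (intro holomorphic_on_divide holomorphic_on_subset[OF holo(1)] holomorphic_on_subset[OF holo(2)] Enz) auto
  have cg: "continuous_on (closure (ball 0 1)) g"
    unfolding g_def closure_ball[OF zero_less_one]
    by (intro continuous_on_divide holomorphic_on_imp_continuous_on holomorphic_on_subset[OF holo(1)]
        holomorphic_on_subset[OF holo(2)]) (auto simp: Enz)
  have fr: "norm (g w) \<le> C" if "w \<in> frontier (ball 0 1)" for w
  proof -
    have w: "cmod w = 1" "w \<noteq> 0" using that by (auto simp: frontier_ball)
    then have "g w = (matrix_inv (mat (1/w) - M) *v b)$k" using gX by simp
    moreover have "cmod (1/w) = 1" using w by (simp add: norm_divide)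
    ultimately show ?thesis using order_trans[OF Finite_Cartesian_Product.norm_nth_le circ[of "1/w"]] by simp
  qed
  have xi: "1/\<mu> \<in> ball 0 1" using mu False by (simp add: norm_divide divide_less_eq)
  have "norm (g (1/\<mu>)) \<le> C"
    by (rule maximum_modulus_frontier[OF hg cg _ fr xi]) auto
  moreover have "g (1/\<mu>) = (matrix_inv (mat \<mu> - M) *v b)$k"
  proof -
    have "\<mu> \<noteq> 0" using mu by auto
    then show ?thesis using gX[of "1/\<mu>"] xi by auto
  qed
  ultimately show ?thesis by simp
qed


lemma mv_scaleR_real:
  fixes Q :: "real^'n^'m"
  shows "Q *v (c *\<^sub>R v) = c *\<^sub>R (Q *v v)"
  by (simp add: vec_eq_iff matrix_vector_mult_def sum_distrib_left mult.left_commute)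

lemma cont_mv_real: "continuous_on S (\<lambda>v. (Q::real^'n^'m) *v v)"
  unfolding matrix_vector_mult_def
  by (intro continuous_on_vec_lambda continuous_intros continuous_on_sum
      linear_continuous_on bounded_linear_vec_nth)

lemma pos_q:
  fixes Q :: "real^'n^'n"
  assumes "pos_def Q"
  shows "\<exists>q>0. \<forall>x. x \<bullet> (Q *v x) \<ge> q * norm x ^ 2"
proof -
  define f where "f x = x \<bullet> (Q *v x)" for x :: "real^'n"
  have cf: "continuous_on S f" for S unfolding f_def by (intro continuous_intros cont_mv_real)
  have ne: "sphere (0::real^'n) 1 \<noteq> {}"
    using norm_axis_1[of undefined] by (auto simp: sphere_def intro!: exI[of _ "axis undefined 1"])
  obtain x0 where x0: "x0 \<in> sphere 0 1" and mn: "\<And>y. y \<in> sphere 0 1 \<Longrightarrow> f x0 \<le> f y"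
    using continuous_attains_inf[OF compact_sphere ne cf] by blast
  have "x0 \<noteq> 0" using x0 by auto
  then have qpos: "f x0 > 0" using assms unfolding pos_def_def f_def by blast
  have fs: "f (c *\<^sub>R v) = c^2 * f v" for c v
    by (simp add: f_def mv_scaleR_real power2_eq_square)
  have "x \<bullet> (Q *v x) \<ge> f x0 * norm x ^ 2" for x
  proof (cases "x = 0")
    case True then show ?thesis by simp
  next
    case False
    then have nx: "norm x > 0" by simp
    have "f x0 \<le> f ((1 / norm x) *\<^sub>R x)" using mn[of "(1 / norm x) *\<^sub>R x"] nx by simp
    then have "f x0 \<le> f x / (norm x)^2" unfolding fs by (simp add: power_divide)
    then show ?thesis using nx by (simp add: le_divide_eq f_def)
  qed
  then show ?thesis using qpos by blast
qed

lemma tK: "x \<bullet> (transpose (K::real^'x^'u) *v y) = (K *v x) \<bullet> y"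
  by (simp only: dot_lmul_matrix[symmetric] vector_transpose_matrix)

lemma cont_if:
  "(c \<Longrightarrow> continuous_on S f) \<Longrightarrow> (\<not> c \<Longrightarrow> continuous_on S g) \<Longrightarrow>
   continuous_on S (\<lambda>w. if c then f w else g w)"
  by (cases c) auto

lemma P_bound:
  fixes Q :: "real^'x^'x" and R :: "real^'u^'u" and K :: "real^'x^'u"
  assumes "\<forall>x. x \<bullet> (Q *v x) \<ge> q * norm x ^ 2" "pos_def R"
  shows "x \<bullet> ((Q + transpose K ** R ** K) *v x) \<ge> q * norm x ^ 2"
proof -
  have e: "x \<bullet> ((transpose K ** R ** K) *v x) = (K *v x) \<bullet> (R *v (K *v x))"
  proof -
    have "(transpose K ** R ** K) *v x = transpose K *v (R *v (K *v x))"
      by (simp add: matrix_vector_mul_assoc matrix_mul_assoc)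
    then show ?thesis by (simp only: tK)
  qed
  have "(K *v x) \<bullet> (R *v (K *v x)) \<ge> 0"
    using assms(2) unfolding pos_def_def by (cases "K *v x = 0") (auto intro: less_imp_le)
  moreover have "q * norm x ^ 2 \<le> x \<bullet> (Q *v x)" using assms(1) by blast
  ultimately show ?thesis using e by (simp add: matrix_vector_mult_add_rdistrib inner_add_right)
qed

lemma P_sym:
  fixes Q :: "real^'x^'x" and R :: "real^'u^'u" and K :: "real^'x^'u"
  assumes "pos_def Q" "pos_def R"
  shows "transpose (Q + transpose K ** R ** K) = Q + transpose K ** R ** K"
proof -
  have "transpose Q = Q" "transpose R = R" using assms unfolding pos_def_def by auto
  moreover have "transpose (X + Y) = transpose X + transpose (Y::real^'x^'x)" for X Y
    by (simp add: transpose_def vec_eq_iff)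
  ultimately show ?thesis by (simp add: matrix_transpose_mul matrix_mul_assoc)
qed

lemma unif_res:
  fixes Mc :: "complex^'n^'n"
  assumes eig: "\<forall>z\<in>eigenvalues Mc. cmod z < 1"
  shows "\<exists>D. \<forall>z v. cmod z = 1 \<longrightarrow> norm (matrix_inv (mat z - Mc) *v v) \<le> D * norm v"
proof -
  define f where "f z = cmod (det (mat z - Mc))" for z
  have cf: "continuous_on S f" for S unfolding f_def
    by (intro continuous_intros det_cont) (simp add: mat_def, intro continuous_intros cont_if)
  have ne: "sphere (0::complex) 1 \<noteq> {}" by (auto simp: sphere_def intro!: exI[of _ 1])
  obtain z0 where z0: "z0 \<in> sphere 0 1" and mn: "\<And>y. y \<in> sphere 0 1 \<Longrightarrow> f z0 \<le> f y"
    using continuous_attains_inf[OF compact_sphere ne cf] by blast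
  define \<delta> where "\<delta> = f z0"
  have dpos: "\<delta> > 0" using det_not_eig[OF eig, of z0] z0 by (simp add: \<delta>_def f_def)
  define \<beta> where "\<beta> = 1 + (\<Sum>i\<in>UNIV. \<Sum>j\<in>UNIV. norm (Mc$i$j))"
  have b1: "\<beta> \<ge> 1" unfolding \<beta>_def by (simp add: sum_nonneg)
  have entry: "norm (Mc$i$j) \<le> (\<Sum>i\<in>UNIV. \<Sum>j\<in>UNIV. norm (Mc$i$j))" for i j
  proof -
    have "norm (Mc$i$j) \<le> (\<Sum>j\<in>UNIV. norm (Mc$i$j))"
      by (rule member_le_sum) auto
    also have "\<dots> \<le> (\<Sum>i\<in>UNIV. \<Sum>j\<in>UNIV. norm (Mc$i$j))"
      by (rule member_le_sum[where f="\<lambda>i. \<Sum>j\<in>UNIV. norm (Mc$i$j)"]) (auto intro: sum_nonneg)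
    finally show ?thesis .
  qed
  define c0 where "c0 = fact CARD('n) * \<beta> ^ CARD('n) / \<delta>"
  have unit: "norm (matrix_inv (mat z - Mc) *v w) \<le> CARD('n) * c0"
    if z: "cmod z = 1" and w: "norm w = 1" for z w
  proof -
    have dz: "det (mat z - Mc) \<noteq> 0" using det_not_eig[OF eig] z by simp
    have dl: "cmod (det (mat z - Mc)) \<ge> \<delta>" using mn[of z] z by (simp add: \<delta>_def f_def)
    have comp: "norm ((matrix_inv (mat z - Mc) *v w)$k) \<le> c0" for k
    proof -
      have "norm (det (\<chi> i j. if j = k then w$i else (mat z - Mc)$i$j)) \<le> fact CARD('n) * \<beta> ^ CARD('n)"
      proof (rule det_bound)
        fix i j
        show "norm ((\<chi> i j. if j = k then w$i else (mat z - Mc)$i$j) $ i $ j) \<le> \<beta>"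
        proof (cases "j = k")
          case True
          then show ?thesis using Finite_Cartesian_Product.norm_nth_le[of w i] w b1 by simp
        next
          case False
          have "norm ((mat z - Mc)$i$j) \<le> norm ((mat z :: complex^'n^'n)$i$j) + norm (Mc$i$j)"
            by (simp add: norm_triangle_ineq4)
          also have "\<dots> \<le> 1 + (\<Sum>i\<in>UNIV. \<Sum>j\<in>UNIV. norm (Mc$i$j))"
            using entry[of i j] z by (intro add_mono) (auto simp: mat_def)
          finally show ?thesis using False by (simp add: \<beta>_def)
        qed
      qed
      then show ?thesis unfolding cramer_inv[OF dz] c0_def norm_divide
        using dl dpos b1 by (intro frac_le) auto
    qed
    have "norm (matrix_inv (mat z - Mc) *v w) \<le> (\<Sum>k\<in>UNIV. norm ((matrix_inv (mat z - Mc) *v w)$k))"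
      by (rule norm_le_sum_comp)
    also have "\<dots> \<le> (\<Sum>k\<in>(UNIV::'n set). c0)" by (intro sum_mono comp)
    finally show ?thesis by simp
  qed
  have "norm (matrix_inv (mat z - Mc) *v v) \<le> (CARD('n) * c0) * norm v" if "cmod z = 1" for z v
  proof (cases "v = 0")
    case True then show ?thesis by simp
  next
    case False
    define w where "w = (1 / norm v) *\<^sub>R v"
    have nw: "norm w = 1" using False by (simp add: w_def)
    have "v = norm v *\<^sub>R w" using False by (simp add: w_def)
    then have "matrix_inv (mat z - Mc) *v v = norm v *\<^sub>R (matrix_inv (mat z - Mc) *v w)"
      by (metis mv_scaleR)
    then show ?thesis using unit[OF that nw] by (simp add: mult.commute mult_left_mono)
  qed
  then show ?thesis by blast
qed


lemma unit_cis: "cmod z = 1 \<Longrightarrow> \<exists>\<omega>\<in>{0..2*pi}. z = cis \<omega>"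
  using Arg2pi_eq[of z] Arg2pi_ge_0[of z] Arg2pi_lt_2pi[of z]
  by (intro bexI[of _ "Arg2pi z"]) (auto simp: cis_conv_exp)

lemma circle_bound:
  fixes M P :: "real^'n^'n"
  assumes eig: "\<forall>z\<in>eigenvalues (cmat M). cmod z < 1"
    and Psym: "transpose P = P"
    and Ppos: "\<And>y::complex^'n. inner y (cmat P *v y) \<ge> q * norm y ^ 2" and q: "q > 0"
    and J: "(SUP \<omega>\<in>{0..2*pi}. sqrt (lambda_max (transpose (cnjm (matrix_inv (mat (cis \<omega>) - cmat M)))
               ** cmat P ** matrix_inv (mat (cis \<omega>) - cmat M)))) \<le> \<gamma>"
    and z: "cmod z = 1"
  shows "norm (matrix_inv (mat z - cmat M) *v v) \<le> sqrt (\<gamma>^2/q) * norm v"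
proof -
  define X where "X \<omega> = matrix_inv (mat (cis \<omega>) - cmat M)" for \<omega>
  define H where "H \<omega> = transpose (cnjm (X \<omega>)) ** cmat P ** X \<omega>" for \<omega>
  have inH: "inner u (H \<omega> *v v) = inner (X \<omega> *v u) (cmat P *v (X \<omega> *v v))" for \<omega> u v
  proof -
    have "H \<omega> *v v = transpose (cnjm (X \<omega>)) *v (cmat P *v (X \<omega> *v v))"
      by (simp add: H_def matrix_vector_mul_assoc matrix_mul_assoc)
    then show ?thesis by (simp only: inner_transpose_cnjm)
  qed
  have sym: "inner u (H \<omega> *v v) = inner v (H \<omega> *v u)" for \<omega> u v
    unfolding inH by (rule inner_cmat_sym[OF Psym])
  obtain D where D: "\<And>z v. cmod z = 1 \<Longrightarrow> norm (matrix_inv (mat z - cmat M) *v v) \<le> D * norm v"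
    using unif_res[OF eig] by blast
  define cP where "cP = (\<Sum>i\<in>UNIV. \<Sum>j\<in>UNIV. norm (cmat P $i$j))"
  have cP0: "cP \<ge> 0" unfolding cP_def by (intro sum_nonneg) auto
  have upper: "inner v (H \<omega> *v v) \<le> (cP * D^2) * norm v ^ 2" for \<omega> v
  proof -
    define a where "a = X \<omega> *v v"
    have na: "norm a \<le> D * norm v" unfolding a_def X_def by (rule D) simp
    have "inner v (H \<omega> *v v) = inner a (cmat P *v a)" by (simp add: inH a_def)
    also have "\<dots> \<le> norm a * norm (cmat P *v a)" by (rule norm_cauchy_schwarz)
    also have "\<dots> \<le> norm a * (cP * norm a)"
      unfolding cP_def by (intro mult_left_mono norm_mv_bound) auto
    also have "\<dots> = cP * norm a ^ 2" by (simp add: power2_eq_square)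
    also have "\<dots> \<le> cP * (D * norm v) ^ 2"
      by (intro mult_left_mono power_mono na cP0) auto
    finally show ?thesis by (simp add: power_mult_distrib)
  qed
  have lup: "lambda_max (H \<omega>) \<le> cP * D^2" for \<omega>
    by (rule lmax_props(2)[OF sym upper])
  have bdd: "bdd_above ((\<lambda>\<omega>. sqrt (lambda_max (H \<omega>))) ` {0..2*pi})"
    by (rule bdd_aboveI[of _ "sqrt (cP * D^2)"]) (auto intro: real_sqrt_le_mono lup)
  obtain \<omega> where \<omega>: "\<omega> \<in> {0..2*pi}" "z = cis \<omega>" using unit_cis[OF z] by blast
  have "sqrt (lambda_max (H \<omega>)) \<le> \<gamma>"
    using cSUP_upper[OF \<omega>(1) bdd] J unfolding H_def X_def by linarith
  have lower: "q * norm (X \<omega> *v u) ^ 2 \<le> lambda_max (H \<omega>) * norm u ^ 2" for u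
  proof -
    have "q * norm (X \<omega> *v u) ^ 2 \<le> inner u (H \<omega> *v u)" unfolding inH by (rule Ppos)
    also have "\<dots> \<le> lambda_max (H \<omega>) * norm u ^ 2" by (rule lmax_props(1)[OF sym])
    finally show ?thesis .
  qed
  have l0: "lambda_max (H \<omega>) \<ge> 0"
  proof -
    have "0 \<le> q * norm (X \<omega> *v axis undefined 1) ^ 2" using q by simp
    also have "\<dots> \<le> lambda_max (H \<omega>)" using lower[of "axis undefined 1"] by (simp add: norm_axis_1)
    finally show ?thesis .
  qed
  have g0: "\<gamma> \<ge> 0" using \<open>sqrt (lambda_max (H \<omega>)) \<le> \<gamma>\<close> l0 by (meson order_trans real_sqrt_ge_zero)
  have lg: "lambda_max (H \<omega>) \<le> \<gamma>^2"
    using \<open>sqrt (lambda_max (H \<omega>)) \<le> \<gamma>\<close> l0 by (metis power_mono real_sqrt_ge_zero real_sqrt_pow2)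
  have "q * norm (X \<omega> *v v) ^ 2 \<le> \<gamma>^2 * norm v ^ 2"
    using lower[of v] lg by (meson mult_right_mono order_trans zero_le_power2)
  then have "norm (X \<omega> *v v) ^ 2 \<le> (\<gamma>^2/q) * norm v ^ 2"
    using q by (simp add: field_simps)
  then have "norm (X \<omega> *v v) \<le> sqrt ((\<gamma>^2/q) * norm v ^ 2)" by (rule real_le_rsqrt)
  also have "sqrt ((\<gamma>^2/q) * norm v ^ 2) = sqrt (\<gamma>^2/q) * norm v"
    by (simp only: real_sqrt_mult real_sqrt_abs abs_norm_cancel)
  finally show ?thesis using \<omega>(2) by (simp add: X_def)
qed


lemma eig_lt1:
  assumes "spectral_radius M < 1" "z \<in> eigenvalues (cmat M)"
  shows "cmod z < 1"
proof -
  have "cmod z \<le> Max (cmod ` eigenvalues (cmat M))"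
    using assms(2) finite_eigenvalues by (intro Max_ge) auto
  then show ?thesis using assms(1) unfolding spectral_radius_def by simp
qed

lemma eig_ge1:
  assumes "\<not> spectral_radius M < 1"
  obtains z where "z \<in> eigenvalues (cmat M)" "cmod z \<ge> 1"
proof -
  have "Max (cmod ` eigenvalues (cmat M)) \<in> cmod ` eigenvalues (cmat M)"
    using finite_eigenvalues eigenvalues_nonempty by (intro Max_in) auto
  then obtain z where "z \<in> eigenvalues (cmat M)" "cmod z = Max (cmod ` eigenvalues (cmat M))" by auto
  then show ?thesis using that assms unfolding spectral_radius_def by auto
qed

lemma entry_real_bound:
  fixes N :: "real^'n^'m"
  shows "\<bar>N$i$j\<bar> \<le> norm N"
  using component_le_norm_cart[of "N$i" j] Finite_Cartesian_Product.norm_nth_le[of N i] by linarith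

lemma prod_entry_bound:
  fixes B :: "real^'u^'x" and D :: "real^'y^'u"
  shows "\<bar>(B ** D)$i$j\<bar> \<le> CARD('u) * (norm B * norm D)"
proof -
  have "\<bar>(B ** D)$i$j\<bar> \<le> (\<Sum>l\<in>(UNIV::'u set). \<bar>B$i$l\<bar> * \<bar>D$l$j\<bar>)"
    unfolding matrix_matrix_mult_def by (simp add: sum_abs[THEN order_trans] abs_mult)
  also have "\<dots> \<le> (\<Sum>l\<in>(UNIV::'u set). norm B * norm D)"
    by (intro sum_mono mult_mono entry_real_bound) auto
  finally show ?thesis by simp
qed

theorem lemma4:
  fixes A :: "real^'x^'x" and B :: "real^'u^'x"
    and Q :: "real^'x^'x" and R :: "real^'u^'u" and \<gamma> :: real
  assumes "pos_def Q" and "pos_def R" and "stabilizable A B"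
    and "\<gamma> \<ge> Jopt A B Q R"
  shows "\<exists>\<epsilon>>0. \<forall>K\<in>{K\<in>stab_set A B. Jcost A B Q R K \<le> \<gamma>}.
           \<forall>L\<in>- stab_set A B. norm (K - L) \<ge> \<epsilon>"
proof -
  obtain q where q: "q > 0" "\<And>x. x \<bullet> (Q *v x) \<ge> q * norm x ^ 2" using pos_q[OF assms(1)] by blast
  define C where "C = sqrt (\<gamma>^2/q)"
  have C0: "C \<ge> 0" unfolding C_def using q by simp
  define n where "n = real CARD('x)"
  define c where "c = n * C * (n * n * (CARD('u) * norm B))"
  have c0: "c \<ge> 0" unfolding c_def n_def using C0 by simp
  define \<epsilon> where "\<epsilon> = 1 / (c + 1)"
  have "\<epsilon> > 0" using c0 by (simp add: \<epsilon>_def)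
  moreover have "norm (K - L) \<ge> \<epsilon>" if K: "K \<in> stab_set A B" "Jcost A B Q R K \<le> \<gamma>"
    and L: "L \<notin> stab_set A B" for K L
  proof (rule ccontr)
    assume "\<not> norm (K - L) \<ge> \<epsilon>"
    then have KL: "norm (K - L) < \<epsilon>" by simp
    define M where "M = A - B ** K"
    define P where "P = Q + transpose K ** R ** K"
    have eig: "\<forall>z\<in>eigenvalues (cmat M). cmod z < 1"
      using K(1) eig_lt1 unfolding stab_set_def M_def by blast
    have Psym: "transpose P = P" unfolding P_def by (rule P_sym[OF assms(1,2)])
    have Ppos: "inner y (cmat P *v y) \<ge> q * norm y ^ 2" for y :: "complex^'x"
      by (rule cmat_pos) (unfold P_def, rule P_bound[OF _ assms(2)], use q in blast)
    have J: "(SUP \<omega>\<in>{0..2*pi}. sqrt (lambda_max (transpose (cnjm (matrix_inv (mat (cis \<omega>) - cmat M)))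
               ** cmat P ** matrix_inv (mat (cis \<omega>) - cmat M)))) \<le> \<gamma>"
    proof -
      have "Jcost A B Q R K = (SUP \<omega>\<in>{0..2*pi}. sqrt (lambda_max (transpose (cnjm (matrix_inv (mat (cis \<omega>) - cmat M)))
               ** cmat P ** matrix_inv (mat (cis \<omega>) - cmat M))))"
        unfolding Jcost_def
      proof (rule SUP_cong[OF refl])
        fix \<omega> :: real
        have e1: "mat (cis \<omega>) - cmat A + cmat (B ** K) = mat (cis \<omega>) - cmat M"
          by (simp add: M_def cmat_def vec_eq_iff)
        have e2: "mat (cis (-\<omega>)) - cmat A + cmat (B ** K) = cnjm (mat (cis \<omega>) - cmat M)"
          by (simp add: M_def cmat_def cnjm_def mat_def vec_eq_iff cis_cnj)
        have d: "det (mat (cis \<omega>) - cmat M) \<noteq> 0" using det_not_eig[OF eig] by simp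
        show "sqrt (lambda_max (transpose (matrix_inv (mat (cis (- \<omega>)) - cmat A + cmat (B ** K))) **
                 cmat (Q + transpose K ** R ** K) ** matrix_inv (mat (cis \<omega>) - cmat A + cmat (B ** K))))
            = sqrt (lambda_max (transpose (cnjm (matrix_inv (mat (cis \<omega>) - cmat M))) **
                 cmat P ** matrix_inv (mat (cis \<omega>) - cmat M)))"
          unfolding e1 e2 cnjm_inv[OF d] P_def ..
      qed
      then show ?thesis using K(2) by simp
    qed
    have circ: "norm (matrix_inv (mat z - cmat M) *v b) \<le> C * norm b" if "cmod z = 1" for z b
      unfolding C_def by (rule circle_bound[OF eig Psym Ppos q(1) J that])
    define Mq where "Mq = A - B ** L"
    obtain \<mu> where mu: "\<mu> \<in> eigenvalues (cmat Mq)" "cmod \<mu> \<ge> 1"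
      using eig_ge1[of Mq] L unfolding stab_set_def Mq_def by auto
    obtain v where v: "v \<noteq> 0" "(mat \<mu> - cmat Mq) *v v = 0"
      using mu(1) det_zero_eigvec unfolding eigenvalues_def by blast
    define N where "N = B ** (K - L)"
    define b where "b = cmat N *v v"
    have eqM: "mat \<mu> - cmat M = (mat \<mu> - cmat Mq) + cmat N"
      by (simp add: M_def Mq_def N_def cmat_def vec_eq_iff matrix_matrix_mult_def
          sum_subtractf right_diff_distrib algebra_simps)
    have Mv: "(mat \<mu> - cmat M) *v v = b"
      by (subst eqM) (simp only: matrix_vector_mult_add_rdistrib v(2) b_def add_0_left)
    have dmu: "det (mat \<mu> - cmat M) \<noteq> 0" using det_not_eig[OF eig mu(2)] .
    have vX: "v = matrix_inv (mat \<mu> - cmat M) *v b"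
      using inv_left_apply[OF dmu, of v] Mv by simp
    have comp: "norm (v$k) \<le> C * norm b" for k
      unfolding vX by (rule outside_bound[OF eig circ mu(2)])
    have "norm v \<le> (\<Sum>k\<in>(UNIV::'x set). norm (v$k))" by (rule norm_le_sum_comp)
    also have "\<dots> \<le> (\<Sum>k\<in>(UNIV::'x set). C * norm b)" by (intro sum_mono comp)
    finally have nv1: "norm v \<le> n * C * norm b" by (simp add: n_def)
    have "norm b \<le> (\<Sum>i\<in>UNIV. \<Sum>j\<in>UNIV. norm (cmat N $i$j)) * norm v"
      unfolding b_def by (rule norm_mv_bound)
    also have "(\<Sum>i\<in>UNIV. \<Sum>j\<in>UNIV. norm (cmat N $i$j)) \<le>
        (\<Sum>i\<in>(UNIV::'x set). \<Sum>j\<in>(UNIV::'x set). CARD('u) * (norm B * norm (K - L)))"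
      unfolding N_def cmat_def by (intro sum_mono) (simp add: prod_entry_bound)
    also have "\<dots> = n * n * (CARD('u) * norm B) * norm (K - L)" by (simp add: n_def)
    finally have nb: "norm b \<le> n * n * (CARD('u) * norm B) * norm (K - L) * norm v"
      by (simp add: mult_right_mono)
    have "norm v \<le> c * norm (K - L) * norm v"
    proof -
      have "norm v \<le> n * C * (n * n * (CARD('u) * norm B) * norm (K - L) * norm v)"
        using nv1 nb C0 by (smt (verit) mult_left_mono n_def of_nat_0_le_iff mult_nonneg_nonneg)
      then show ?thesis by (simp add: c_def algebra_simps)
    qed
    moreover have "c * norm (K - L) < 1"
    proof -
      have "c * norm (K - L) \<le> c * \<epsilon>" using KL c0 by (simp add: mult_left_mono)
      also have "\<dots> < 1" using c0 by (simp add: \<epsilon>_def)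
      finally show ?thesis .
    qed
    moreover have "norm v > 0" using v(1) by simp
    ultimately show False by (smt (verit) mult_less_cancel_right2)
  qed
  ultimately show ?thesis by blast
qed

end
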